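(* Let $G$ be a countable locally finite group (every finite subset of $G$ is contained in a finite subgroup). Then the ballean $\mathcal{B}(G)$ is decomposable in a direct product of finite sets, i.e. it is asymorphic to $\mathcal{B}(Z)$ for some direct product $Z=\otimes_{\lambda<\delta}(Z_\lambda,e_\lambda)$ of a pointed family of finite sets $Z_\lambda$.
   Context: For an infinite group $G$ with identity $e$, $\mathcal{B}(G)=(G,\mathcal{F},B)$ where $\mathcal{F}=\{A\subseteq G: e\in A, |A|<|G|\}$ and $B(g,A)=gA$. For balleans $(X_1,P_1,B_1)$, $(X_2,P_2,B_2)$ (sets with families of balls $B(x,\alpha)\subseteq X$ indexed by $x\in X,\alpha\in P$), a map $f:X_1\to X_2$ is a $\prec$-mapping if for every $\alpha\in P_1$ there is $\beta\in P_2$ with $f(B_1(x,\alpha))\subseteq B_2(f(x),\beta)$ for all $x$; a bijection $f$ is an asymorphism if $f$ and $f^{-1}$ are $\prec$-mappings. Given an ordinal $\delta$ and non-empty sets $Z_\lambda$ ($\lambda<\delta$) with chosen points $e_\lambda\in Z_\lambda$, the direct product $Z=\otimes_{\lambda<\delta}(Z_\lambda,e_\lambda)$ is the set of functions $f$ on $\{\lambda:\lambda<\delta\}$ with $f(\lambda)\in Z_\lambda$ and $f(\lambda)=e_\lambda$ for all but finitely many $\lambda$; its ballean is $\mathcal{B}(Z)=(Z,\{\lambda:\lambda<\delta\},B)$ with $B(f,\lambda)=\{g\in Z: g(\lambda')=f(\lambda')\text{ for all }\lambda\le\lambda'<\delta\}$. *)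

theory Defs
  imports "HOL-Algebra.Coset" "HOL-Library.Countable_Set"
begin

text \<open>A ballean is given by a support set X, a set of radii P and a ball function
  B :: point => radius => set.\<close>

definition prec_mapping ::
  "'x set \<Rightarrow> 'p set \<Rightarrow> ('x \<Rightarrow> 'p \<Rightarrow> 'x set) \<Rightarrow>
   'y set \<Rightarrow> 'q set \<Rightarrow> ('y \<Rightarrow> 'q \<Rightarrow> 'y set) \<Rightarrow> ('x \<Rightarrow> 'y) \<Rightarrow> bool" where
  "prec_mapping X1 P1 B1 X2 P2 B2 f \<longleftrightarrow>
     (\<forall>x\<in>X1. f x \<in> X2) \<and>
     (\<forall>\<alpha>\<in>P1. \<exists>\<beta>\<in>P2. \<forall>x\<in>X1. f ` (B1 x \<alpha>) \<subseteq> B2 (f x) \<beta>)"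

definition asymorphism ::
  "'x set \<Rightarrow> 'p set \<Rightarrow> ('x \<Rightarrow> 'p \<Rightarrow> 'x set) \<Rightarrow>
   'y set \<Rightarrow> 'q set \<Rightarrow> ('y \<Rightarrow> 'q \<Rightarrow> 'y set) \<Rightarrow> ('x \<Rightarrow> 'y) \<Rightarrow> bool" where
  "asymorphism X1 P1 B1 X2 P2 B2 f \<longleftrightarrow>
     bij_betw f X1 X2 \<and>
     prec_mapping X1 P1 B1 X2 P2 B2 f \<and>
     prec_mapping X2 P2 B2 X1 P1 B1 (inv_into X1 f)"

definition asymorphic ::
  "'x set \<Rightarrow> 'p set \<Rightarrow> ('x \<Rightarrow> 'p \<Rightarrow> 'x set) \<Rightarrow>
   'y set \<Rightarrow> 'q set \<Rightarrow> ('y \<Rightarrow> 'q \<Rightarrow> 'y set) \<Rightarrow> bool" where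
  "asymorphic X1 P1 B1 X2 P2 B2 \<longleftrightarrow> (\<exists>f. asymorphism X1 P1 B1 X2 P2 B2 f)"

definition grp_radii :: "('a, 'b) monoid_scheme \<Rightarrow> 'a set set" where
  "grp_radii G = {A. A \<subseteq> carrier G \<and> \<one>\<^bsub>G\<^esub> \<in> A \<and> (card_of A, card_of (carrier G)) \<in> ordLess}"

definition grp_ball :: "('a, 'b) monoid_scheme \<Rightarrow> 'a \<Rightarrow> 'a set \<Rightarrow> 'a set" where
  "grp_ball G g A = g <#\<^bsub>G\<^esub> A"

definition locally_finite_group :: "('a, 'b) monoid_scheme \<Rightarrow> bool" where
  "locally_finite_group G \<longleftrightarrow> group G \<and>
     (\<forall>A. A \<subseteq> carrier G \<and> finite A \<longrightarrow> (\<exists>H. subgroup H G \<and> finite H \<and> A \<subseteq> H))"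

text \<open>The ordinal delta is represented by a well-order r; the indices lambda < delta are
  the elements of Field r, and lambda <= lambda' is (lambda, lambda') in r.\<close>

definition dprod :: "('i \<times> 'i) set \<Rightarrow> ('i \<Rightarrow> 'z set) \<Rightarrow> ('i \<Rightarrow> 'z) \<Rightarrow> ('i \<Rightarrow> 'z) set" where
  "dprod r Zs e = {f. (\<forall>i\<in>Field r. f i \<in> Zs i) \<and> (\<forall>i. i \<notin> Field r \<longrightarrow> f i = undefined)
                       \<and> finite {i\<in>Field r. f i \<noteq> e i}}"

definition dprod_ball :: "('i \<times> 'i) set \<Rightarrow> ('i \<Rightarrow> 'z set) \<Rightarrow> ('i \<Rightarrow> 'z) \<Rightarrow>
    ('i \<Rightarrow> 'z) \<Rightarrow> 'i \<Rightarrow> ('i \<Rightarrow> 'z) set" where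
  "dprod_ball r Zs e f i = {g \<in> dprod r Zs e. \<forall>j. (i, j) \<in> r \<longrightarrow> g j = f j}"

end

theory Submission
  imports Defs
begin

lemma radii_iff:
  assumes cnt: "countable C" and inf: "infinite C" and sub: "A \<subseteq> C"
  shows "((card_of A, card_of C) \<in> ordLess) \<longleftrightarrow> finite A"
proof
  assume l: "(card_of A, card_of C) \<in> ordLess"
  show "finite A"
  proof (rule ccontr)
    assume "infinite A"
    then obtain f :: "nat \<Rightarrow> _" where f: "inj f" "range f \<subseteq> A"
      using infinite_countable_subset by blast
    have "inj_on (f \<circ> to_nat_on C) C \<and> (f \<circ> to_nat_on C) ` C \<subseteq> A"
      using f inj_on_to_nat_on[OF cnt] by (auto intro: comp_inj_on inj_on_subset)
    hence "(card_of C, card_of A) \<in> ordLeq" using card_of_ordLeq by blast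
    thus False using not_ordLess_ordLeq[OF l] by blast
  qed
next
  assume "finite A"
  thus "(card_of A, card_of C) \<in> ordLess"
    using finite_ordLess_infinite[OF card_of_Well_order card_of_Well_order] inf
    by (simp add: Field_card_of)
qed

context group
begin

lemma rel_sym:
  assumes "subgroup K G" "a \<in> carrier G" "b \<in> carrier G" "inv a \<otimes> b \<in> K"
  shows "inv b \<otimes> a \<in> K"
proof -
  have "inv (inv a \<otimes> b) \<in> K" using assms(1,4) by (rule subgroup.m_inv_closed)
  also have "inv (inv a \<otimes> b) = inv b \<otimes> a" using assms(2,3) by (simp add: inv_mult_group)
  finally show ?thesis .
qed
lemma rel_trans:
  assumes "subgroup K G" "a \<in> carrier G" "b \<in> carrier G" "c \<in> carrier G"
    "inv a \<otimes> b \<in> K" "inv b \<otimes> c \<in> K"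
  shows "inv a \<otimes> c \<in> K"
proof -
  have "(inv a \<otimes> b) \<otimes> (inv b \<otimes> c) \<in> K" using assms(1,5,6) by (rule subgroup.m_closed)
  also have "(inv a \<otimes> b) \<otimes> (inv b \<otimes> c) = inv a \<otimes> (b \<otimes> inv b) \<otimes> c"
    using assms(2-4) by (simp only: m_assoc inv_closed m_closed)
  also have "\<dots> = inv a \<otimes> c" using assms(2-4) by simp
  finally show ?thesis .
qed
lemma inv_prod_shuffle:
  assumes "p \<in> carrier G" "q \<in> carrier G" "s \<in> carrier G" "t \<in> carrier G"
  shows "inv (p \<otimes> s) \<otimes> (q \<otimes> t) = inv s \<otimes> (inv p \<otimes> q) \<otimes> t"
  using assms by (simp add: inv_mult_group m_assoc)

lemma cancel1[simp]: "x \<in> carrier G \<Longrightarrow> y \<in> carrier G \<Longrightarrow> x \<otimes> (inv x \<otimes> y) = y"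
  by (simp add: m_assoc[symmetric])

lemma cancel2[simp]: "x \<in> carrier G \<Longrightarrow> y \<in> carrier G \<Longrightarrow> inv x \<otimes> (x \<otimes> y) = y"
  by (simp add: m_assoc[symmetric])

lemma sandwich_iff:
  assumes K: "subgroup K G" and st: "s \<in> K" "t \<in> K" and Z: "Z \<in> carrier G"
  shows "inv s \<otimes> Z \<otimes> t \<in> K \<longleftrightarrow> Z \<in> K"
proof
  have sc: "s \<in> carrier G" "t \<in> carrier G"
    using subgroup.mem_carrier[OF K st(1)] subgroup.mem_carrier[OF K st(2)] .
  assume h: "inv s \<otimes> Z \<otimes> t \<in> K"
  have "s \<otimes> (inv s \<otimes> Z \<otimes> t) \<otimes> inv t \<in> K"
    using subgroup.m_closed[OF K subgroup.m_closed[OF K st(1) h] subgroup.m_inv_closed[OF K st(2)]] .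
  also have "s \<otimes> (inv s \<otimes> Z \<otimes> t) \<otimes> inv t = Z"
    using sc Z by (simp add: m_assoc)
  finally show "Z \<in> K" .
next
  assume a: "Z \<in> K"
  show "inv s \<otimes> Z \<otimes> t \<in> K"
    using subgroup.m_closed[OF K subgroup.m_closed[OF K subgroup.m_inv_closed[OF K st(1)] a] st(2)] .
qed

end

locale lfg = group G for G :: "('a,'b) monoid_scheme" (structure) +
  assumes cnt: "countable (carrier G)" and inf: "infinite (carrier G)"
    and lf: "locally_finite_group G"
begin

definition enum :: "nat \<Rightarrow> 'a" where "enum = from_nat_into (carrier G)"

lemma enum_in: "enum n \<in> carrier G"
  unfolding enum_def using inf from_nat_into by (metis finite.emptyI)

primrec HH :: "nat \<Rightarrow> 'a set" where
  "HH 0 = {\<one>}"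
| "HH (Suc n) = (SOME K. subgroup K G \<and> finite K \<and> HH n \<union> {enum n} \<subseteq> K)"

declare HH.simps(2)[simp del]

lemma HH_props: "subgroup (HH n) G \<and> finite (HH n)"
proof (induction n)
  case 0 thus ?case using triv_subgroup by simp
next
  case (Suc n)
  have "HH n \<union> {enum n} \<subseteq> carrier G \<and> finite (HH n \<union> {enum n})"
    using Suc subgroup.subset[of "HH n"] enum_in by blast
  hence "\<exists>K. subgroup K G \<and> finite K \<and> HH n \<union> {enum n} \<subseteq> K"
    using lf unfolding locally_finite_group_def by blast
  hence "subgroup (HH (Suc n)) G \<and> finite (HH (Suc n)) \<and> HH n \<union> {enum n} \<subseteq> HH (Suc n)"
    unfolding HH.simps by (rule someI_ex)
  thus ?case by blast
qed

lemma HH_sg: "subgroup (HH n) G" using HH_props by blast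
lemma HH_one: "\<one> \<in> HH n" using subgroup.one_closed[OF HH_sg] .
lemma HH_mult: "a \<in> HH n \<Longrightarrow> b \<in> HH n \<Longrightarrow> a \<otimes> b \<in> HH n" using subgroup.m_closed[OF HH_sg] .
lemma HH_inv: "a \<in> HH n \<Longrightarrow> inv a \<in> HH n" using subgroup.m_inv_closed[OF HH_sg] .
lemma HH_fin: "finite (HH n)" using HH_props by blast

lemma HH_Suc: "HH n \<union> {enum n} \<subseteq> HH (Suc n)"
proof -
  have "HH n \<union> {enum n} \<subseteq> carrier G \<and> finite (HH n \<union> {enum n})"
    using HH_props subgroup.subset[of "HH n"] enum_in by blast
  hence "\<exists>K. subgroup K G \<and> finite K \<and> HH n \<union> {enum n} \<subseteq> K"
    using lf unfolding locally_finite_group_def by blast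
  hence "subgroup (HH (Suc n)) G \<and> finite (HH (Suc n)) \<and> HH n \<union> {enum n} \<subseteq> HH (Suc n)"
    unfolding HH.simps by (rule someI_ex)
  thus ?thesis by blast
qed

lemma HH_mono: "m \<le> n \<Longrightarrow> HH m \<subseteq> HH n"
  using lift_Suc_mono_le[of HH] HH_Suc by blast

lemma HH_car: "HH n \<subseteq> carrier G" using subgroup.subset[OF HH_sg] .

lemma finite_in_HH: "finite A \<Longrightarrow> A \<subseteq> carrier G \<Longrightarrow> \<exists>n. A \<subseteq> HH n"
proof (induction A rule: finite_induct)
  case empty thus ?case by blast
next
  case (insert a A)
  then obtain n where n: "A \<subseteq> HH n" by blast
  have "a = enum (to_nat_on (carrier G) a)"
  proof -
    have "a \<in> carrier G" using insert.prems by blast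
    thus ?thesis unfolding enum_def using from_nat_into_to_nat_on[OF cnt] by simp
  qed
  hence a: "a \<in> HH (Suc (to_nat_on (carrier G) a))" using HH_Suc by blast
  let ?m = "max n (Suc (to_nat_on (carrier G) a))"
  have "insert a A \<subseteq> HH ?m" using a n HH_mono[of n ?m] HH_mono[of "Suc (to_nat_on (carrier G) a)" ?m]
    by auto
  thus ?case by blast
qed

definition pick :: "nat \<Rightarrow> 'a \<Rightarrow> 'a" where
  "pick n h = (if h \<in> HH n then \<one> else SOME h'. h' \<in> HH (Suc n) \<and> inv h \<otimes> h' \<in> HH n)"

definition TT :: "nat \<Rightarrow> 'a set" where "TT n = pick n ` HH (Suc n)"

lemma pick_in:
  assumes h: "h \<in> HH (Suc n)"
  shows "pick n h \<in> HH (Suc n) \<and> inv h \<otimes> pick n h \<in> HH n"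
proof (cases "h \<in> HH n")
  case True
  hence "h \<in> carrier G" using HH_car by blast
  thus ?thesis using True HH_sg[of n] HH_sg[of "Suc n"]
    by (simp add: pick_def HH_one HH_inv)
next
  case False
  have hc: "h \<in> carrier G" using h HH_car by blast
  have "h \<in> HH (Suc n) \<and> inv h \<otimes> h \<in> HH n" using h hc by (simp add: HH_one)
  hence "(SOME h'. h' \<in> HH (Suc n) \<and> inv h \<otimes> h' \<in> HH n) \<in> HH (Suc n) \<and>
      inv h \<otimes> (SOME h'. h' \<in> HH (Suc n) \<and> inv h \<otimes> h' \<in> HH n) \<in> HH n"
    by (rule someI)
  thus ?thesis using False by (simp add: pick_def)
qed

lemma pick_cong:
  assumes h1: "h1 \<in> HH (Suc n)" and h2: "h2 \<in> HH (Suc n)" and r: "inv h1 \<otimes> h2 \<in> HH n"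
  shows "pick n h1 = pick n h2"
proof -
  have c1: "h1 \<in> carrier G" and c2: "h2 \<in> carrier G" using h1 h2 HH_car by blast+
  have r': "inv h2 \<otimes> h1 \<in> HH n" using rel_sym[OF HH_sg c1 c2 r] .
  have mem: "h1 \<in> HH n \<longleftrightarrow> h2 \<in> HH n"
  proof
    assume a: "h1 \<in> HH n"
    have "h1 \<otimes> (inv h1 \<otimes> h2) \<in> HH n" by (rule subgroup.m_closed[OF HH_sg a r])
    also have "h1 \<otimes> (inv h1 \<otimes> h2) = h2" using c1 c2 by (simp add: m_assoc[symmetric])
    finally show "h2 \<in> HH n" .
  next
    assume a: "h2 \<in> HH n"
    have "h2 \<otimes> (inv h2 \<otimes> h1) \<in> HH n" by (rule subgroup.m_closed[OF HH_sg a r'])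
    also have "h2 \<otimes> (inv h2 \<otimes> h1) = h1" using c1 c2 by (simp add: m_assoc[symmetric])
    finally show "h1 \<in> HH n" .
  qed
  have P: "\<And>h'. (h' \<in> HH (Suc n) \<and> inv h1 \<otimes> h' \<in> HH n) = (h' \<in> HH (Suc n) \<and> inv h2 \<otimes> h' \<in> HH n)"
  proof (rule iffI)
    fix h' assume a: "h' \<in> HH (Suc n) \<and> inv h1 \<otimes> h' \<in> HH n"
    hence hc: "h' \<in> carrier G" using HH_car by blast
    show "h' \<in> HH (Suc n) \<and> inv h2 \<otimes> h' \<in> HH n" using a rel_trans[OF HH_sg c2 c1 hc r'] by blast
  next
    fix h' assume a: "h' \<in> HH (Suc n) \<and> inv h2 \<otimes> h' \<in> HH n"
    hence hc: "h' \<in> carrier G" using HH_car by blast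
    show "h' \<in> HH (Suc n) \<and> inv h1 \<otimes> h' \<in> HH n" using a rel_trans[OF HH_sg c1 c2 hc r] by blast
  qed
  have "(SOME h'. h' \<in> HH (Suc n) \<and> inv h1 \<otimes> h' \<in> HH n) = (SOME h'. h' \<in> HH (Suc n) \<and> inv h2 \<otimes> h' \<in> HH n)"
    using P by presburger
  thus ?thesis unfolding pick_def using mem by presburger
qed

lemma TT_sub: "TT n \<subseteq> HH (Suc n)" unfolding TT_def using pick_in by blast

lemma TT_car: "t \<in> TT n \<Longrightarrow> t \<in> carrier G" using TT_sub HH_car by blast

lemma one_TT: "\<one> \<in> TT n"
proof -
  have "\<one> \<in> HH (Suc n)" using HH_one by blast
  moreover have "pick n \<one> = \<one>" unfolding pick_def using HH_one by simp
  ultimately show ?thesis unfolding TT_def by (metis image_eqI)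
qed

lemma TT_fin: "finite (TT n)" unfolding TT_def using HH_fin by blast

lemma TT_cover: "h \<in> HH (Suc n) \<Longrightarrow> \<exists>t\<in>TT n. inv t \<otimes> h \<in> HH n"
proof -
  assume h: "h \<in> HH (Suc n)"
  have "pick n h \<in> HH (Suc n)" "inv h \<otimes> pick n h \<in> HH n" using pick_in[OF h] by auto
  hence "inv (pick n h) \<otimes> h \<in> HH n" using rel_sym[OF HH_sg] h HH_car by blast
  thus ?thesis unfolding TT_def using h by blast
qed

lemma TT_unique:
  assumes s: "s \<in> TT n" and t: "t \<in> TT n" and r: "inv s \<otimes> t \<in> HH n"
  shows "s = t"
proof -
  obtain h1 h2 where h: "h1 \<in> HH (Suc n)" "h2 \<in> HH (Suc n)" "s = pick n h1" "t = pick n h2"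
    using s t unfolding TT_def by blast
  have c: "h1 \<in> carrier G" "h2 \<in> carrier G" "s \<in> carrier G" "t \<in> carrier G"
    using h TT_car s t HH_car by blast+
  have a1: "inv h1 \<otimes> s \<in> HH n" using pick_in h by blast
  have a2: "inv t \<otimes> h2 \<in> HH n" using pick_in[OF h(2)] h(4) rel_sym[OF HH_sg] c by blast
  have "inv h1 \<otimes> t \<in> HH n" using rel_trans[OF HH_sg c(1) c(3) c(4) a1 r] .
  hence "inv h1 \<otimes> h2 \<in> HH n" using rel_trans[OF HH_sg c(1) c(4) c(2) _ a2] by blast
  thus ?thesis using pick_cong h by metis
qed

primrec RR :: "(nat \<Rightarrow> 'a) \<Rightarrow> nat \<Rightarrow> nat \<Rightarrow> 'a" where
  "RR a n 0 = \<one>"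
| "RR a n (Suc d) = RR a (Suc n) d \<otimes> a n"

definition digits :: "(nat \<Rightarrow> 'a) \<Rightarrow> bool" where "digits a \<longleftrightarrow> (\<forall>k. a k \<in> TT k)"

lemma digit_HH: "digits a \<Longrightarrow> a k \<in> HH (Suc k)" unfolding digits_def using TT_sub by blast
lemma digit_car: "digits a \<Longrightarrow> a k \<in> carrier G" unfolding digits_def using TT_car by blast

lemma RR_in: "digits a \<Longrightarrow> RR a n d \<in> HH (n + d)"
proof (induction d arbitrary: n)
  case 0 thus ?case using HH_one by simp
next
  case (Suc d)
  have "RR a (Suc n) d \<in> HH (Suc n + d)" using Suc by blast
  hence "RR a (Suc n) d \<in> HH (n + Suc d)" by simp
  moreover have "a n \<in> HH (n + Suc d)" using digit_HH[OF Suc.prems] HH_mono[of "Suc n" "n + Suc d"] by auto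
  ultimately show ?case using HH_mult by simp
qed

lemma RR_car: "digits a \<Longrightarrow> RR a n d \<in> carrier G" using RR_in HH_car by blast

lemma RR_cong: "(\<forall>k. n \<le> k \<longrightarrow> k < n + d \<longrightarrow> a k = b k) \<Longrightarrow> RR a n d = RR b n d"
proof (induction d arbitrary: n)
  case 0 thus ?case by simp
next
  case (Suc d)
  have "RR a (Suc n) d = RR b (Suc n) d" using Suc.IH Suc.prems by auto
  moreover have "a n = b n" using Suc.prems by auto
  ultimately show ?case by simp
qed

lemma RR_split: "digits a \<Longrightarrow> RR a m (n + d) = RR a (m + n) d \<otimes> RR a m n"
proof (induction n arbitrary: m)
  case 0 thus ?case using RR_car by simp
next
  case (Suc n)
  have "RR a m (Suc n + d) = RR a (Suc m) (n + d) \<otimes> a m" by simp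
  also have "\<dots> = (RR a (Suc m + n) d \<otimes> RR a (Suc m) n) \<otimes> a m" using Suc by simp
  also have "\<dots> = RR a (m + Suc n) d \<otimes> (RR a (Suc m) n \<otimes> a m)"
    using Suc.prems RR_car digit_car by (simp add: m_assoc)
  finally show ?case by simp
qed

lemma RR_one: "(\<forall>k\<ge>n. a k = \<one>) \<Longrightarrow> RR a n d = \<one>"
  by (induction d arbitrary: n) auto

lemma RR_key:
  assumes a: "digits a" and b: "digits b"
  shows "inv (RR a n d) \<otimes> RR b n d \<in> HH n \<longleftrightarrow> (\<forall>k. n \<le> k \<longrightarrow> k < n + d \<longrightarrow> a k = b k)"
proof (induction d arbitrary: n)
  case 0 thus ?case using HH_one by simp
next
  case (Suc d)
  let ?p = "RR a (Suc n) d" and ?q = "RR b (Suc n) d"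
  have c: "?p \<in> carrier G" "?q \<in> carrier G" "a n \<in> carrier G" "b n \<in> carrier G"
    using RR_car digit_car a b by blast+
  show ?case
  proof
    assume h: "inv (RR a n (Suc d)) \<otimes> RR b n (Suc d) \<in> HH n"
    hence h1: "inv (a n) \<otimes> (inv ?p \<otimes> ?q) \<otimes> b n \<in> HH n"
      using inv_prod_shuffle[OF c(1) c(2) c(3) c(4)] by simp
    hence "inv (a n) \<otimes> (inv ?p \<otimes> ?q) \<otimes> b n \<in> HH (Suc n)" using HH_mono[of n "Suc n"] by auto
    hence "inv ?p \<otimes> ?q \<in> HH (Suc n)"
      using sandwich_iff[OF HH_sg digit_HH[OF a] digit_HH[OF b]] c by blast
    hence ag: "\<forall>k. Suc n \<le> k \<longrightarrow> k < Suc n + d \<longrightarrow> a k = b k" using Suc.IH by blast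
    hence pq: "?p = ?q" using RR_cong by blast
    have "inv (a n) \<otimes> (inv ?p \<otimes> ?p) \<otimes> b n \<in> HH n" using h1 pq by simp
    hence "inv (a n) \<otimes> b n \<in> HH n" using c by simp
    hence "a n = b n" using TT_unique a b unfolding digits_def by blast
    thus "\<forall>k. n \<le> k \<longrightarrow> k < n + Suc d \<longrightarrow> a k = b k" using ag
      by (metis Suc_le_eq add_Suc_shift le_neq_implies_less)
  next
    assume "\<forall>k. n \<le> k \<longrightarrow> k < n + Suc d \<longrightarrow> a k = b k"
    hence "RR a n (Suc d) = RR b n (Suc d)" using RR_cong by blast
    thus "inv (RR a n (Suc d)) \<otimes> RR b n (Suc d) \<in> HH n"
      using RR_car[OF b, of n "Suc d"] HH_one by (simp del: RR.simps)
  qed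
qed

definition cc :: "'a \<Rightarrow> nat" where "cc = to_nat_on (carrier G)"
definition dec :: "nat \<Rightarrow> 'a" where "dec = from_nat_into (carrier G)"
definition Zs :: "nat \<Rightarrow> nat set" where "Zs n = cc ` TT n"
definition ee :: "nat \<Rightarrow> nat" where "ee n = cc \<one>"
definition DD :: "(nat \<Rightarrow> nat) set" where "DD = dprod natLeq Zs ee"

lemma dec_cc: "g \<in> carrier G \<Longrightarrow> dec (cc g) = g"
  unfolding dec_def cc_def by (rule from_nat_into_to_nat_on[OF cnt])

lemma DD_iff: "x \<in> DD \<longleftrightarrow> (\<forall>i. x i \<in> Zs i) \<and> finite {i. x i \<noteq> ee i}"
  unfolding DD_def dprod_def Field_natLeq by simp

definition dg :: "(nat \<Rightarrow> nat) \<Rightarrow> nat \<Rightarrow> 'a" where "dg x = (\<lambda>i. dec (x i))"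

lemma DD_dec:
  assumes x: "x \<in> DD" shows "dec (x i) \<in> TT i \<and> cc (dec (x i)) = x i"
proof -
  have "x i \<in> cc ` TT i" using x unfolding DD_iff Zs_def by blast
  then obtain t where t: "t \<in> TT i" "x i = cc t" by blast
  have "dec (x i) = t" using t dec_cc[OF TT_car[OF t(1)]] by simp
  thus ?thesis using t by simp
qed

lemma dg_digits: "x \<in> DD \<Longrightarrow> digits (dg x)"
  unfolding digits_def dg_def using DD_dec by blast

lemma cc_dg: "x \<in> DD \<Longrightarrow> cc (dg x i) = x i"
  unfolding dg_def using DD_dec by blast

lemma dg_ee: "x i = ee i \<Longrightarrow> dg x i = \<one>"
  unfolding dg_def ee_def using dec_cc[OF one_closed] by simp

lemma dg_eq_iff: "x \<in> DD \<Longrightarrow> y \<in> DD \<Longrightarrow> dg x i = dg y i \<longleftrightarrow> x i = y i"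
proof -
  assume x: "x \<in> DD" and y: "y \<in> DD"
  show ?thesis
  proof
    assume "dg x i = dg y i"
    hence "cc (dg x i) = cc (dg y i)" by simp
    thus "x i = y i" using cc_dg[OF x] cc_dg[OF y] by simp
  qed (simp add: dg_def)
qed

definition bnd :: "(nat \<Rightarrow> nat) \<Rightarrow> nat" where "bnd x = (SOME N. \<forall>k\<ge>N. x k = ee k)"

lemma bnd: "x \<in> DD \<Longrightarrow> \<forall>k\<ge>bnd x. x k = ee k"
proof -
  assume "x \<in> DD"
  then obtain m where m: "\<forall>n\<in>{i. x i \<noteq> ee i}. n < m" using DD_iff finite_nat_set_iff_bounded by blast
  hence "\<forall>k\<ge>m. x k = ee k" by force
  thus ?thesis unfolding bnd_def by (rule someI)
qed

definition phi :: "(nat \<Rightarrow> nat) \<Rightarrow> 'a" where "phi x = RR (dg x) 0 (bnd x)"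

lemma phi_eq:
  assumes x: "x \<in> DD" and M: "\<forall>k\<ge>M. x k = ee k"
  shows "phi x = RR (dg x) 0 M"
proof -
  have dgs: "digits (dg x)" using dg_digits x .
  have one1: "RR (dg x) M (bnd x) = \<one>" using M dg_ee by (intro RR_one) auto
  have one2: "RR (dg x) (bnd x) M = \<one>" using bnd[OF x] dg_ee by (intro RR_one) auto
  have "RR (dg x) 0 (M + bnd x) = RR (dg x) 0 M"
    using RR_split[OF dgs, of 0 M "bnd x"] one1 RR_car[OF dgs] by simp
  moreover have "RR (dg x) 0 (bnd x + M) = phi x"
    using RR_split[OF dgs, of 0 "bnd x" M] one2 RR_car[OF dgs] by (simp add: phi_def)
  ultimately show ?thesis by (simp add: add.commute)
qed

lemma phi_car: "x \<in> DD \<Longrightarrow> phi x \<in> carrier G"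
  unfolding phi_def using RR_car dg_digits by blast

lemma K:
  assumes x: "x \<in> DD" and y: "y \<in> DD"
  shows "inv (phi x) \<otimes> phi y \<in> HH n \<longleftrightarrow> (\<forall>k\<ge>n. x k = y k)"
proof -
  let ?M = "bnd x + bnd y"
  let ?a = "dg x" and ?b = "dg y"
  have da: "digits ?a" and db: "digits ?b" using dg_digits x y by blast+
  have hx: "\<forall>k\<ge>n + ?M. x k = ee k" using bnd[OF x] by auto
  have hy: "\<forall>k\<ge>n + ?M. y k = ee k" using bnd[OF y] by auto
  have px: "phi x = RR ?a n ?M \<otimes> RR ?a 0 n"
    using phi_eq[OF x hx] RR_split[OF da, of 0 n ?M] by simp
  have py: "phi y = RR ?b n ?M \<otimes> RR ?b 0 n"
    using phi_eq[OF y hy] RR_split[OF db, of 0 n ?M] by simp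
  have qa: "RR ?a 0 n \<in> HH n" and qb: "RR ?b 0 n \<in> HH n" using RR_in[OF da, of 0 n] RR_in[OF db, of 0 n] by simp_all
  have eq: "inv (phi x) \<otimes> phi y = inv (RR ?a 0 n) \<otimes> (inv (RR ?a n ?M) \<otimes> RR ?b n ?M) \<otimes> RR ?b 0 n"
    unfolding px py by (rule inv_prod_shuffle[OF RR_car[OF da] RR_car[OF db] RR_car[OF da] RR_car[OF db]])
  have Zc: "inv (RR ?a n ?M) \<otimes> RR ?b n ?M \<in> carrier G"
    using RR_car[OF da, of n ?M] RR_car[OF db, of n ?M] by simp
  have "inv (phi x) \<otimes> phi y \<in> HH n \<longleftrightarrow> inv (RR ?a n ?M) \<otimes> RR ?b n ?M \<in> HH n"
    unfolding eq by (rule sandwich_iff[OF HH_sg qa qb Zc])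
  also have "\<dots> \<longleftrightarrow> (\<forall>k. n \<le> k \<longrightarrow> k < n + ?M \<longrightarrow> ?a k = ?b k)" using RR_key[OF da db] .
  also have "\<dots> \<longleftrightarrow> (\<forall>k\<ge>n. x k = y k)"
  proof
    assume h: "\<forall>k. n \<le> k \<longrightarrow> k < n + ?M \<longrightarrow> ?a k = ?b k"
    show "\<forall>k\<ge>n. x k = y k"
    proof (intro allI impI)
      fix k assume "n \<le> k"
      show "x k = y k"
      proof (cases "k < n + ?M")
        case True thus ?thesis using h \<open>n \<le> k\<close> dg_eq_iff x y by blast
      next
        case False thus ?thesis using bnd[OF x] bnd[OF y] by simp
      qed
    qed
  next
    assume "\<forall>k\<ge>n. x k = y k"
    thus "\<forall>k. n \<le> k \<longrightarrow> k < n + ?M \<longrightarrow> ?a k = ?b k" by (simp add: dg_def)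
  qed
  finally show ?thesis .
qed

lemma ee_DD: "ee \<in> DD"
proof -
  have "\<forall>i. ee i \<in> Zs i" unfolding Zs_def ee_def using one_TT by blast
  thus ?thesis unfolding DD_iff by simp
qed

lemma surj_aux: "g \<in> HH N \<Longrightarrow> \<exists>x\<in>DD. (\<forall>k\<ge>N. x k = ee k) \<and> RR (dg x) 0 N = g"
proof (induction N arbitrary: g)
  case 0
  hence "g = \<one>" by simp
  thus ?case using ee_DD by auto
next
  case (Suc N)
  obtain t where t: "t \<in> TT N" "inv t \<otimes> g \<in> HH N" using TT_cover[OF Suc.prems] by blast
  obtain x' where x': "x' \<in> DD" "\<forall>k\<ge>N. x' k = ee k" "RR (dg x') 0 N = inv t \<otimes> g"
    using Suc.IH[OF t(2)] by blast
  define x where "x = x'(N := cc t)"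
  have sub: "{i. x i \<noteq> ee i} \<subseteq> insert N {i. x' i \<noteq> ee i}" unfolding x_def by auto
  have fin: "finite {i. x' i \<noteq> ee i}" using x'(1) unfolding DD_iff by blast
  have zs: "\<forall>i. x i \<in> Zs i"
  proof
    fix i show "x i \<in> Zs i"
    proof (cases "i = N")
      case True thus ?thesis unfolding x_def Zs_def using t(1) by simp
    next
      case False thus ?thesis unfolding x_def using x'(1) unfolding DD_iff by simp
    qed
  qed
  have xD: "x \<in> DD" unfolding DD_iff using zs finite_subset[OF sub] fin by blast
  have hi: "\<forall>k\<ge>Suc N. x k = ee k" using x'(2) unfolding x_def by auto
  have dgs: "digits (dg x)" using dg_digits[OF xD] .
  have gc: "g \<in> carrier G" using Suc.prems HH_car by blast
  have tc: "t \<in> carrier G" using TT_car[OF t(1)] .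
  have "RR (dg x) 0 (Suc N) = RR (dg x) N 1 \<otimes> RR (dg x) 0 N"
    using RR_split[OF dgs, of 0 N 1] by simp
  also have "RR (dg x) N 1 = t" using dec_cc[OF tc] tc unfolding x_def dg_def by simp
  also have "RR (dg x) 0 N = RR (dg x') 0 N" by (rule RR_cong) (simp add: dg_def x_def)
  also have "RR (dg x') 0 N = inv t \<otimes> g" by (rule x'(3))
  also have "t \<otimes> (inv t \<otimes> g) = g" using tc gc by simp
  finally have "RR (dg x) 0 (Suc N) = g" .
  thus ?case using xD hi by blast
qed

lemma phi_bij: "bij_betw phi DD (carrier G)"
proof -
  have "inj_on phi DD"
  proof (rule inj_onI)
    fix x y assume xy: "x \<in> DD" "y \<in> DD" "phi x = phi y"
    hence "inv (phi x) \<otimes> phi y \<in> HH 0" using phi_car by simp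
    hence "\<forall>k\<ge>0. x k = y k" using K xy by blast
    thus "x = y" by auto
  qed
  moreover have "phi ` DD = carrier G"
  proof
    show "phi ` DD \<subseteq> carrier G" using phi_car by blast
  next
    show "carrier G \<subseteq> phi ` DD"
    proof
      fix g assume g: "g \<in> carrier G"
      obtain N where "{g} \<subseteq> HH N" using finite_in_HH g by blast
      then obtain x where "x \<in> DD" "\<forall>k\<ge>N. x k = ee k" "RR (dg x) 0 N = g" using surj_aux by blast
      thus "g \<in> phi ` DD" using phi_eq by (metis image_eqI)
    qed
  qed
  ultimately show ?thesis unfolding bij_betw_def by blast
qed

lemma radii: "A \<in> grp_radii G \<longleftrightarrow> A \<subseteq> carrier G \<and> \<one> \<in> A \<and> finite A"
  unfolding grp_radii_def using radii_iff[OF cnt inf] by blast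

lemma main_asym: "asymorphic (carrier G) (grp_radii G) (grp_ball G) DD (Field natLeq) (dprod_ball natLeq Zs ee)"
proof -
  let ?f = "inv_into DD phi"
  have bf: "bij_betw ?f (carrier G) DD" using bij_betw_inv_into[OF phi_bij] .
  have inv2: "\<And>x. x \<in> DD \<Longrightarrow> inv_into (carrier G) ?f x = phi x"
    using inv_into_inv_into_eq[OF phi_bij] by blast
  have phif: "\<And>g. g \<in> carrier G \<Longrightarrow> phi (?f g) = g"
    using phi_bij by (simp add: bij_betw_inv_into_right)
  have fD: "\<And>g. g \<in> carrier G \<Longrightarrow> ?f g \<in> DD" using bf bij_betwE by blast
  have ball: "\<And>y x n. y \<in> dprod_ball natLeq Zs ee x n \<longleftrightarrow> y \<in> DD \<and> (\<forall>j\<ge>n. y j = x j)"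
    unfolding dprod_ball_def DD_def natLeq_def by simp
  have P1: "prec_mapping (carrier G) (grp_radii G) (grp_ball G) DD (Field natLeq) (dprod_ball natLeq Zs ee) ?f"
    unfolding prec_mapping_def
  proof (intro conjI ballI)
    fix g assume "g \<in> carrier G" thus "?f g \<in> DD" using fD by blast
  next
    fix A assume "A \<in> grp_radii G"
    hence A: "A \<subseteq> carrier G" "finite A" using radii by auto
    then obtain n where n: "A \<subseteq> HH n" using finite_in_HH by blast
    show "\<exists>\<beta>\<in>Field natLeq. \<forall>x\<in>carrier G. ?f ` grp_ball G x A \<subseteq> dprod_ball natLeq Zs ee (?f x) \<beta>"
    proof (intro bexI ballI subsetI)
      show "n \<in> Field natLeq" by (simp add: Field_natLeq)
    next
      fix g z assume g: "g \<in> carrier G" and z: "z \<in> ?f ` grp_ball G g A"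
      then obtain a where a: "a \<in> A" "z = ?f (g \<otimes> a)"
        unfolding grp_ball_def l_coset_def by blast
      have ac: "a \<in> carrier G" using a A by blast
      have ga: "g \<otimes> a \<in> carrier G" using g ac by simp
      have "inv (phi (?f g)) \<otimes> phi (?f (g \<otimes> a)) = a"
        using phif g ga ac by (simp add: m_assoc[symmetric])
      hence "inv (phi (?f g)) \<otimes> phi (?f (g \<otimes> a)) \<in> HH n" using a n by auto
      hence "\<forall>k\<ge>n. ?f g k = ?f (g \<otimes> a) k" using K fD g ga by blast
      thus "z \<in> dprod_ball natLeq Zs ee (?f g) n" using ball a fD ga by auto
    qed
  qed
  have P2: "prec_mapping DD (Field natLeq) (dprod_ball natLeq Zs ee) (carrier G) (grp_radii G) (grp_ball G)
      (inv_into (carrier G) ?f)"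
    unfolding prec_mapping_def
  proof (intro conjI ballI)
    fix x assume "x \<in> DD" thus "inv_into (carrier G) ?f x \<in> carrier G" using inv2 phi_car by simp
  next
    fix n assume "n \<in> Field natLeq"
    show "\<exists>\<beta>\<in>grp_radii G. \<forall>x\<in>DD. inv_into (carrier G) ?f ` dprod_ball natLeq Zs ee x n
            \<subseteq> grp_ball G (inv_into (carrier G) ?f x) \<beta>"
    proof (intro bexI ballI subsetI)
      show "HH n \<in> grp_radii G" using radii HH_car HH_fin HH_one by blast
    next
      fix x z assume x: "x \<in> DD" and z: "z \<in> inv_into (carrier G) ?f ` dprod_ball natLeq Zs ee x n"
      then obtain y where y: "y \<in> DD" "\<forall>j\<ge>n. y j = x j" "z = inv_into (carrier G) ?f y"
        using ball by blast
      have zy: "z = phi y" using y inv2 by simp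
      have "inv (phi x) \<otimes> phi y \<in> HH n" using K x y by simp
      moreover have "phi y = phi x \<otimes> (inv (phi x) \<otimes> phi y)"
        using phi_car x y by (simp add: m_assoc[symmetric])
      ultimately show "z \<in> grp_ball G (inv_into (carrier G) ?f x) (HH n)"
        unfolding grp_ball_def l_coset_def inv2[OF x] zy by blast
    qed
  qed
  show ?thesis unfolding asymorphic_def asymorphism_def using bf P1 P2 by blast
qed

end

theorem corollary1:
  fixes G :: "('a, 'b) monoid_scheme"
  assumes "group G"
    and "countable (carrier G)"
    and "infinite (carrier G)"
    and "locally_finite_group G"
  shows "\<exists>(r :: (nat \<times> nat) set) (Zs :: nat \<Rightarrow> nat set) (e :: nat \<Rightarrow> nat).
           Well_order r \<and>
           (\<forall>i\<in>Field r. finite (Zs i) \<and> e i \<in> Zs i) \<and>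
           asymorphic (carrier G) (grp_radii G) (grp_ball G)
                      (dprod r Zs e) (Field r) (dprod_ball r Zs e)"
proof -
  interpret lfg G using assms by (simp add: lfg_def lfg_axioms_def)
  have "Well_order natLeq" by (rule natLeq_Well_order)
  moreover have "\<forall>i\<in>Field natLeq. finite (Zs i) \<and> ee i \<in> Zs i"
    unfolding Zs_def ee_def using TT_fin one_TT by auto
  moreover have "asymorphic (carrier G) (grp_radii G) (grp_ball G)
                      (dprod natLeq Zs ee) (Field natLeq) (dprod_ball natLeq Zs ee)"
    using main_asym unfolding DD_def .
  ultimately show ?thesis by blast
qed

end
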